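(* Let $p_0,p_1,p_2$ be positive integers with $\gcd(p_0,p_1,p_2)=1$, and put $n=p_0+p_1+p_2$. Let $E=(\mathbb{Z}/n\mathbb{Z})\times\{0,1,2\}$ and define permutations $\sigma_0,\sigma_1$ of $E$ by $$\sigma_0(m,0)=(m,1),\quad \sigma_0(m,1)=(m,2),\quad \sigma_0(m,2)=(m,0),$$ $$\sigma_1(m,0)=(m-p_1,2),\quad \sigma_1(m,1)=(m-p_2,0),\quad \sigma_1(m,2)=(m-p_0,1),$$ with arithmetic in the first coordinate modulo $n$. Let $\alpha=\gcd(n,\,p_0p_1-p_2^2)$. Then the subgroup $\langle\sigma_0\sigma_1,\sigma_1\sigma_0\rangle$ of the symmetric group on $E$ has order $n^2/\alpha$.
   Context: These $\sigma_0,\sigma_1$ are the monodromy permutations of the dessin drawn on the rational billiards surface of the triangle with angles $(p_0\pi/n,p_1\pi/n,p_2\pi/n)$, acting on its $3n$ edges labeled $(m,i)$. Products are composition of functions: $(\sigma_0\sigma_1)(e)=\sigma_0(\sigma_1(e))$. *)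

theory Defs
  imports "HOL-Algebra.Algebra"
begin

definition dessin_edges :: "nat \<Rightarrow> (nat \<times> nat) set" where
  "dessin_edges n = {0..<n} \<times> {0..<3}"

definition sigma0 :: "nat \<Rightarrow> nat \<times> nat \<Rightarrow> nat \<times> nat" where
  "sigma0 n = restrict (\<lambda>(m, i). (m, (i + 1) mod 3)) (dessin_edges n)"

definition sub_mod :: "nat \<Rightarrow> nat \<Rightarrow> nat \<Rightarrow> nat" where
  "sub_mod n m p = nat ((int m - int p) mod int n)"

definition sigma1 :: "nat \<Rightarrow> nat \<Rightarrow> nat \<Rightarrow> nat \<times> nat \<Rightarrow> nat \<times> nat" where
  "sigma1 p0 p1 p2 = (let n = p0 + p1 + p2 in
     restrict (\<lambda>(m, i).
        if i = 0 then (sub_mod n m p1, 2)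
        else if i = 1 then (sub_mod n m p2, 0)
        else (sub_mod n m p0, 1)) (dessin_edges n))"

end

theory Submission
  imports Defs
begin


definition SS :: "int \<Rightarrow> int \<Rightarrow> int \<Rightarrow> int \<Rightarrow> int \<Rightarrow> (int \<times> int) set" where
  "SS n a b c d = (\<lambda>(i,j). ((i*a + j* c) mod n, (i*b + j*d) mod n)) ` UNIV"

definition cont :: "int \<Rightarrow> int \<Rightarrow> int \<Rightarrow> int \<Rightarrow> int" where
  "cont a b c d = gcd (gcd a b) (gcd c d)"

definition II :: "int \<Rightarrow> int \<Rightarrow> int \<Rightarrow> int \<Rightarrow> int \<Rightarrow> int" where
  "II n a b c d = gcd (a*d - b* c) (n * gcd n (cont a b c d))"

lemma cont_eqI:
  assumes "\<And>x. (x dvd a \<and> x dvd b \<and> x dvd c \<and> x dvd d) \<longleftrightarrow> (x dvd a' \<and> x dvd b' \<and> x dvd c' \<and> x dvd d')"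
  shows "cont a b c d = cont a' b' c' d'"
proof -
  have h: "\<And>x a b c d. x dvd cont a b c d \<longleftrightarrow> (x dvd a \<and> x dvd b \<and> x dvd c \<and> x dvd d)"
    by (simp add: cont_def)
  have "cont a b c d dvd cont a' b' c' d'"
    using h[of "cont a b c d" a b c d] assms[of "cont a b c d"] h[of "cont a b c d" a' b' c' d'] by simp
  moreover have "cont a' b' c' d' dvd cont a b c d"
    using h[of "cont a' b' c' d'" a' b' c' d'] assms[of "cont a' b' c' d'"] h[of "cont a' b' c' d'" a b c d] by simp
  ultimately show ?thesis unfolding cont_def by (simp add: zdvd_antisym_nonneg)
qed

lemma II_rowswap: "II n c d a b = II n a b c d"
proof -
  have "cont c d a b = cont a b c d" by (rule cont_eqI) auto
  moreover have "c*b - d*a = - (a*d - b* c)" by simp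
  ultimately show ?thesis unfolding II_def by (metis gcd_neg1)
qed

lemma II_colswap: "II n b a d c = II n a b c d"
proof -
  have "cont b a d c = cont a b c d" by (rule cont_eqI) auto
  moreover have "b* c - a*d = - (a*d - b* c)" by simp
  ultimately show ?thesis unfolding II_def by (metis gcd_neg1)
qed

lemma II_rowop: "II n (a + k* c) (b + k*d) c d = II n a b c d"
proof -
  have "cont (a + k* c) (b + k*d) c d = cont a b c d"
    by (rule cont_eqI) (metis dvd_add dvd_add_left_iff dvd_mult)
  moreover have "(a + k* c)*d - (b + k*d)* c = a*d - b* c" by (simp add: algebra_simps)
  ultimately show ?thesis unfolding II_def by simp
qed

lemma II_colop: "II n a (b + k*a) c (d + k* c) = II n a b c d"
proof -
  have "cont a (b + k*a) c (d + k* c) = cont a b c d"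
    by (rule cont_eqI) (metis dvd_add dvd_add_left_iff dvd_mult)
  moreover have "a*(d + k* c) - (b + k*a)* c = a*d - b* c" by (simp add: algebra_simps)
  ultimately show ?thesis unfolding II_def by simp
qed

lemma SS_rowswap: "SS n c d a b = SS n a b c d"
  unfolding SS_def
  by (auto simp: image_iff) (metis add.commute)+

lemma SS_rowop: "SS n (a + k* c) (b + k*d) c d = SS n a b c d"
proof -
  have 1: "\<exists>i' j'. x = ((i'*a + j'* c) mod n, (i'*b + j'*d) mod n)"
    if "x = ((i*(a+k* c) + j* c) mod n, (i*(b+k*d) + j*d) mod n)" for x i j
    using that by (intro exI[of _ i] exI[of _ "i*k+j"]) (simp add: algebra_simps)
  have 2: "\<exists>i' j'. x = ((i'*(a+k* c) + j'* c) mod n, (i'*(b+k*d) + j'*d) mod n)"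
    if "x = ((i*a + j* c) mod n, (i*b + j*d) mod n)" for x i j
    using that by (intro exI[of _ i] exI[of _ "j - i*k"]) (simp add: algebra_simps)
  show ?thesis unfolding SS_def using 1 2 by (auto simp: image_iff)
qed

lemma SS_sub: "n > 0 \<Longrightarrow> SS n a b c d \<subseteq> {0..<n} \<times> {0..<n}"
  unfolding SS_def by auto

lemma SS_finite: "n > 0 \<Longrightarrow> finite (SS n a b c d)"
  by (rule finite_subset[OF SS_sub]) auto

lemma card_colswap: "card (SS n b a d c) = card (SS n a b c d)"
proof -
  have "SS n b a d c = prod.swap ` SS n a b c d" unfolding SS_def by (auto simp: image_iff) blast+
  thus ?thesis by (simp add: card_image)
qed

lemma colop_mod: "(i*(b + k*a) + j*(d + k* c)) mod (n::int) = ((i*b + j*d) mod n + k*((i*a + j* c) mod n)) mod n"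
proof -
  have "(i*(b + k*a) + j*(d + k* c)) mod n = ((i*b + j*d) + k*(i*a + j* c)) mod n"
    by (simp add: algebra_simps)
  also have "\<dots> = ((i*b + j*d) mod n + k*(i*a + j* c)) mod n"
    by (rule mod_add_left_eq[symmetric])
  also have "\<dots> = ((i*b + j*d) mod n + (k*(i*a + j* c)) mod n) mod n"
    by (rule mod_add_right_eq[symmetric])
  also have "(k*(i*a + j* c)) mod n = (k*((i*a + j* c) mod n)) mod n"
    by (rule mod_mult_right_eq[symmetric])
  also have "((i*b + j*d) mod n + (k*((i*a + j* c) mod n)) mod n) mod n = ((i*b + j*d) mod n + k*((i*a + j* c) mod n)) mod n"
    by (rule mod_add_right_eq)
  finally show ?thesis .
qed

definition colf :: "int \<Rightarrow> int \<Rightarrow> int \<times> int \<Rightarrow> int \<times> int" where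
  "colf n k p = (fst p, (snd p + k * fst p) mod n)"

lemma SS_colop: "SS n a (b + k*a) c (d + k* c) = colf n k ` SS n a b c d"
proof -
  have "SS n a (b + k*a) c (d + k* c) = (colf n k \<circ> (\<lambda>(i,j). ((i*a + j* c) mod n, (i*b + j*d) mod n))) ` UNIV"
    unfolding SS_def by (rule image_cong) (auto simp: colf_def colop_mod)
  thus ?thesis unfolding SS_def by (simp add: image_comp)
qed

lemma card_colop: assumes "n > 0" shows "card (SS n a (b + k*a) c (d + k* c)) = card (SS n a b c d)"
proof -
  have "inj_on (colf n k) (SS n a b c d)"
  proof (rule inj_onI)
    fix p q assume p: "p \<in> SS n a b c d" and q: "q \<in> SS n a b c d" and e: "colf n k p = colf n k q"
    obtain x y where px: "p = (x,y)" by force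
    obtain x' y' where qx: "q = (x',y')" by force
    have "p \<in> {0..<n} \<times> {0..<n}" "q \<in> {0..<n} \<times> {0..<n}" using SS_sub[OF assms, of a b c d] p q by blast+
    hence r: "0 \<le> y" "y < n" "0 \<le> y'" "y' < n" using px qx by auto
    have xx: "x = x'" using e px qx by (simp add: colf_def)
    hence "(y + k*x) mod n = (y' + k*x) mod n" using e px qx by (simp add: colf_def)
    hence "y mod n = y' mod n" by (metis add_diff_cancel_right' mod_diff_left_eq)
    hence "y = y'" using r by simp
    thus "p = q" using px qx xx by simp
  qed
  thus ?thesis by (simp add: card_image SS_colop)
qed

lemma card_range_mult:
  fixes n a :: int assumes "n > 0"
  shows "int (card (range (\<lambda>i. (i*a) mod n))) = n div gcd a n"
proof -
  define g where "g = gcd a n"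
  have g0: "g > 0" using assms g_def by simp
  have gn: "g dvd n" "g dvd a" unfolding g_def by (rule gcd_dvd2, rule gcd_dvd1)
  have eq: "range (\<lambda>i. (i*a) mod n) = (\<lambda>k. k*g) ` {0..<n div g}"
  proof
    show "range (\<lambda>i. (i*a) mod n) \<subseteq> (\<lambda>k. k*g) ` {0..<n div g}"
    proof
      fix x assume "x \<in> range (\<lambda>i. (i*a) mod n)"
      then obtain i where x: "x = (i*a) mod n" by auto
      have "g dvd x" unfolding x using gn by (simp add: dvd_mod)
      then obtain k where k: "x = g*k" by (auto elim: dvdE)
      have "0 \<le> x" "x < n" using x assms by auto
      hence "0 \<le> k" "k < n div g" using k g0 gn
        by (auto simp: zero_le_mult_iff)
      thus "x \<in> (\<lambda>k. k*g) ` {0..<n div g}" using k by (intro image_eqI[of _ _ k]) (auto simp: mult.commute)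
    qed
  next
    show "(\<lambda>k. k*g) ` {0..<n div g} \<subseteq> range (\<lambda>i. (i*a) mod n)"
    proof
      fix x assume "x \<in> (\<lambda>k. k*g) ` {0..<n div g}"
      then obtain k where kx: "x = k*g" and kr: "k \<in> {0..<n div g}" by (rule imageE)
      have k: "x = k*g" "0 \<le> k" "k < n div g" using kx kr by auto
      obtain u v where uv: "u*a + v*n = g" using bezout_int g_def by metis
      have "k*g < (n div g)*g" using k g0 by simp
      also have "(n div g)*g = n" using gn by simp
      finally have "x < n" using k by simp
      hence xm: "x mod n = x" using k g0 by simp
      have "u*a = g - v*n" using uv by linarith
      hence "k*(u*a) = k*(g - v*n)" by simp
      hence "(k*u)*a = k*g + (-(k*v))*n" by (simp add: algebra_simps)
      hence "((k*u)*a) mod n = (k*g + (-(k*v))*n) mod n" by simp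
      also have "\<dots> = x mod n" using k by (simp only: mod_mult_self1)
      finally show "x \<in> range (\<lambda>i. (i*a) mod n)" using xm by (metis rangeI)
    qed
  qed
  have "inj_on (\<lambda>k. k*g) {0..<n div g}" using g0 by (auto simp: inj_on_def)
  hence "card ((\<lambda>k. k*g) ` {0..<n div g}) = card {0..<n div g}" by (rule card_image)
  moreover have "0 \<le> n div g" using assms g0 by (simp add: pos_imp_zdiv_nonneg_iff)
  ultimately show ?thesis unfolding eq g_def[symmetric] by simp
qed

lemma gcd_key:
  fixes a d n :: int assumes "n > 0"
  shows "gcd (a*d) (n * gcd n (gcd a d)) = gcd a n * gcd d n"
proof -
  have 1: "gcd a n * gcd d n = gcd (gcd a n * d) (gcd a n * n)"
    using gcd_mult_distrib_int[of "gcd a n" d n] by simp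
  have 2: "gcd (gcd a n * d) zz = gcd (gcd (d*a) (d*n)) zz" for zz
  proof -
    have "gcd (gcd a n * d) zz = gcd (\<bar>d\<bar> * gcd a n) zz" by (metis gcd_abs1_int abs_mult abs_gcd_int mult.commute)
    also have "\<dots> = gcd (gcd (d*a) (d*n)) zz" by (simp only: gcd_mult_distrib_int)
    finally show ?thesis .
  qed
  have 3: "gcd a n * n = gcd (n*a) (n*n)"
    using gcd_mult_distrib_int[of n a n] assms by (simp add: mult.commute)
  have 4: "n * gcd n (gcd a d) = gcd (n*n) (gcd (n*a) (n*d))"
    using gcd_mult_distrib_int[of n n "gcd a d"] gcd_mult_distrib_int[of n a d] assms by simp
  show ?thesis unfolding 1 2 3 4 by (simp add: ac_simps gcd.left_commute gcd.commute gcd.assoc)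
qed

lemma SS_diag: "SS n a 0 0 d = range (\<lambda>i. (i*a) mod n) \<times> range (\<lambda>j. (j*d) mod n)"
  unfolding SS_def by auto

lemma P_diag:
  fixes n a d :: int assumes "n > 0"
  shows "int (card (SS n a 0 0 d)) * II n a 0 0 d = n^2"
proof -
  have c: "int (card (SS n a 0 0 d)) = (n div gcd a n) * (n div gcd d n)"
    unfolding SS_diag card_cartesian_product using card_range_mult[OF assms] by simp
  have "cont a 0 0 d = gcd a d" unfolding cont_def by simp
  hence i: "II n a 0 0 d = gcd a n * gcd d n" unfolding II_def using gcd_key[OF assms] by simp
  have "(n div gcd a n) * gcd a n = n" "(n div gcd d n) * gcd d n = n" by simp_all
  thus ?thesis unfolding c i by (simp add: power2_eq_square algebra_simps)
qed


definition PP :: "int \<Rightarrow> int \<Rightarrow> int \<Rightarrow> int \<Rightarrow> int \<Rightarrow> int" where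
  "PP n a b c d = int (card (SS n a b c d)) * II n a b c d"

lemma PP_rowswap: "PP n c d a b = PP n a b c d"
  unfolding PP_def by (simp add: SS_rowswap II_rowswap)
lemma PP_rowop: "PP n (a + k* c) (b + k*d) c d = PP n a b c d"
  unfolding PP_def by (simp add: SS_rowop II_rowop)
lemma PP_colswap: "PP n b a d c = PP n a b c d"
  unfolding PP_def by (simp add: card_colswap II_colswap)
lemma PP_colop: "n > 0 \<Longrightarrow> PP n a (b + k*a) c (d + k* c) = PP n a b c d"
  unfolding PP_def by (simp add: card_colop II_colop)
lemma PP_rowop2: "PP n a b (c + k*a) (d + k*b) = PP n a b c d"
  by (metis PP_rowswap PP_rowop)

lemma mod_smaller:
  fixes c a :: int assumes "a \<noteq> 0"
  shows "nat \<bar>c mod a\<bar> < nat \<bar>a\<bar>"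
proof (cases "a > 0")
  case True
  then show ?thesis using pos_mod_bound[of a c] pos_mod_sign[of a c] by simp
next
  case False
  hence "a < 0" using assms by simp
  then show ?thesis using neg_mod_bound[of a c] neg_mod_sign[of a c] by simp
qed

lemma PP_nz:
  fixes n :: int assumes "n > 0"
  shows "a \<noteq> 0 \<Longrightarrow> PP n a b c d = n^2"
proof (induction "nat \<bar>a\<bar>" arbitrary: a b c d rule: less_induct)
  case less
  show ?case
  proof (cases "a dvd c")
    case False
    have e: "c + (- (c div a))*a = c mod a" by (simp add: minus_div_mult_eq_mod[symmetric])
    have nz: "c mod a \<noteq> 0" using False by (simp add: dvd_eq_mod_eq_0)
    have "PP n a b c d = PP n c d a b" by (rule PP_rowswap[symmetric])
    also have "\<dots> = PP n (c + (- (c div a))*a) (d + (- (c div a))*b) a b" by (rule PP_rowop[symmetric])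
    also have "\<dots> = n^2" unfolding e
      by (rule less(1)[OF mod_smaller[OF less(2)] nz])
    finally show ?thesis .
  next
    case True
    show ?thesis
    proof (cases "a dvd b")
      case False
      have e: "b + (- (b div a))*a = b mod a" by (simp add: minus_div_mult_eq_mod[symmetric])
      have nz: "b mod a \<noteq> 0" using False by (simp add: dvd_eq_mod_eq_0)
      have "PP n a b c d = PP n a (b + (- (b div a))*a) c (d + (- (b div a))* c)" by (rule PP_colop[OF assms, symmetric])
      also have "\<dots> = PP n (b + (- (b div a))*a) a (d + (- (b div a))* c) c" by (rule PP_colswap[symmetric])
      also have "\<dots> = n^2" unfolding e
        by (rule less(1)[OF mod_smaller[OF less(2)] nz])
      finally show ?thesis .
    next
      case True2: True
      obtain c' where c': "c = a* c'" using True by (auto elim: dvdE)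
      obtain b' where b': "b = a*b'" using True2 by (auto elim: dvdE)
      have "PP n a b c d = PP n a b (c + (-c')*a) (d + (-c')*b)" by (rule PP_rowop2[symmetric])
      also have "c + (-c')*a = 0" using c' by simp
      also have "PP n a b 0 (d + (-c')*b) = PP n a (b + (-b')*a) 0 ((d + (-c')*b) + (-b')*0)"
        by (rule PP_colop[OF assms, symmetric])
      also have "b + (-b')*a = 0" using b' by simp
      also have "PP n a 0 0 ((d + (-c')*b) + (-b')*0) = n^2"
        unfolding PP_def by (rule P_diag[OF assms])
      finally show ?thesis .
    qed
  qed
qed

lemma PP_all:
  fixes n :: int assumes "n > 0"
  shows "PP n a b c d = n^2"
proof -
  consider "a \<noteq> 0" | "a = 0" "c \<noteq> 0" | "a = 0" "c = 0" "b \<noteq> 0" | "a = 0" "b = 0" "c = 0" by blast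
  then show ?thesis
  proof cases
    case 1 then show ?thesis by (rule PP_nz[OF assms])
  next
    case 2 then show ?thesis using PP_nz[OF assms, of c d a b] PP_rowswap by metis
  next
    case 3 then show ?thesis using PP_nz[OF assms, of b a d c] PP_colswap by metis
  next
    case 4 then show ?thesis using P_diag[OF assms, of 0 d] unfolding PP_def by simp
  qed
qed



definition off :: "int \<Rightarrow> int \<Rightarrow> nat \<Rightarrow> int" where
  "off x y k = (if k = 0 then x else if k = 1 then y else -x-y)"

definition QQ :: "nat \<Rightarrow> int \<Rightarrow> int \<Rightarrow> nat \<times> nat \<Rightarrow> nat \<times> nat" where
  "QQ n x y = restrict (\<lambda>(m,k). (nat ((int m + off x y k) mod int n), k)) (dessin_edges n)"

lemma QQ_in: "n > 0 \<Longrightarrow> e \<in> dessin_edges n \<Longrightarrow> QQ n x y e \<in> dessin_edges n"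
  unfolding QQ_def dessin_edges_def by (auto simp: nat_less_iff)

lemma QQ_comp: assumes "n > 0" "e \<in> dessin_edges n"
  shows "QQ n x y (QQ n x' y' e) = QQ n (x+x') (y+y') e"
proof -
  obtain m k where e: "e = (m,k)" by force
  have in1: "QQ n x' y' e \<in> dessin_edges n" using QQ_in assms by blast
  have a: "QQ n x' y' e = (nat ((int m + off x' y' k) mod int n), k)"
    using assms(2) e unfolding QQ_def by simp
  have b: "(int (nat ((int m + off x' y' k) mod int n)) + off x y k) mod int n
       = (int m + off (x+x') (y+y') k) mod int n"
  proof -
    have "int (nat ((int m + off x' y' k) mod int n)) = (int m + off x' y' k) mod int n"
      using assms by simp
    hence "(int (nat ((int m + off x' y' k) mod int n)) + off x y k) mod int n
        = (int m + off x' y' k + off x y k) mod int n" by (simp add: mod_add_left_eq)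
    also have "int m + off x' y' k + off x y k = int m + off (x+x') (y+y') k"
      unfolding off_def by auto
    finally show ?thesis .
  qed
  show ?thesis using in1 assms(2) unfolding a e unfolding QQ_def using b e a by simp
qed

lemma QQ_zero: assumes "e \<in> dessin_edges n" shows "QQ n 0 0 e = e"
  using assms unfolding QQ_def dessin_edges_def off_def by auto

lemma QQ_ext: "QQ n x y \<in> extensional (dessin_edges n)"
  unfolding QQ_def by simp

lemma QQ_Bij: assumes "n > 0" shows "QQ n x y \<in> Bij (dessin_edges n)"
proof -
  have "bij_betw (QQ n x y) (dessin_edges n) (dessin_edges n)"
  proof (rule bij_betw_byWitness[where f' = "QQ n (-x) (-y)"])
    show "\<forall>a\<in>dessin_edges n. QQ n (- x) (- y) (QQ n x y a) = a"
      using QQ_comp[OF assms] QQ_zero by simp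
    show "\<forall>a\<in>dessin_edges n. QQ n x y (QQ n (- x) (- y) a) = a"
      using QQ_comp[OF assms] QQ_zero by simp
    show "QQ n x y ` dessin_edges n \<subseteq> dessin_edges n" using QQ_in[OF assms] by blast
    show "QQ n (-x) (-y) ` dessin_edges n \<subseteq> dessin_edges n" using QQ_in[OF assms] by blast
  qed
  thus ?thesis unfolding Bij_def using QQ_ext by blast
qed

lemma QQ_compose: assumes "n > 0"
  shows "compose (dessin_edges n) (QQ n x y) (QQ n x' y') = QQ n (x+x') (y+y')"
proof
  fix e show "compose (dessin_edges n) (QQ n x y) (QQ n x' y') e = QQ n (x+x') (y+y') e"
  proof (cases "e \<in> dessin_edges n")
    case True
    then show ?thesis using QQ_comp[OF assms True] by (simp add: compose_def)
  next
    case False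
    then show ?thesis by (simp add: compose_def QQ_def)
  qed
qed

lemma QQ_mult: assumes "n > 0"
  shows "QQ n x y \<otimes>\<^bsub>BijGroup (dessin_edges n)\<^esub> QQ n x' y' = QQ n (x+x') (y+y')"
  using QQ_Bij[OF assms] QQ_compose[OF assms] unfolding BijGroup_def by simp

lemma QQ_one: "\<one>\<^bsub>BijGroup (dessin_edges n)\<^esub> = QQ n 0 0"
proof -
  have "(\<lambda>x\<in>dessin_edges n. x) = QQ n 0 0"
  proof
    fix e show "(\<lambda>x\<in>dessin_edges n. x) e = QQ n 0 0 e"
      using QQ_zero[of e n] by (cases "e \<in> dessin_edges n") (auto simp: QQ_def)
  qed
  thus ?thesis unfolding BijGroup_def by simp
qed

lemma QQ_inv: assumes "n > 0"
  shows "inv\<^bsub>BijGroup (dessin_edges n)\<^esub> (QQ n x y) = QQ n (-x) (-y)"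
proof -
  interpret group "BijGroup (dessin_edges n)" by (rule group_BijGroup)
  have "QQ n (-x) (-y) \<otimes>\<^bsub>BijGroup (dessin_edges n)\<^esub> QQ n x y = \<one>\<^bsub>BijGroup (dessin_edges n)\<^esub>"
    by (simp add: QQ_mult[OF assms] QQ_one)
  moreover have "QQ n x y \<in> carrier (BijGroup (dessin_edges n))" "QQ n (-x) (-y) \<in> carrier (BijGroup (dessin_edges n))"
    by (simp_all add: BijGroup_def QQ_Bij[OF assms])
  ultimately show ?thesis by (rule inv_equality)
qed

lemma mod_aux: "(m + (-(x mod N) - y mod N)) mod (N::int) = (m + (-x - y)) mod N"
proof -
  have "(-(x mod N) - y mod N) mod N = ((-(x mod N)) mod N - y mod N) mod N" by (simp add: mod_diff_left_eq)
  also have "\<dots> = ((-x) mod N - y mod N) mod N" by (simp add: mod_minus_eq)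
  also have "\<dots> = (-x - y) mod N" by (simp add: mod_diff_eq)
  finally have "(-(x mod N) - y mod N) mod N = (-x - y) mod N" .
  thus ?thesis by (metis mod_add_right_eq)
qed

lemma QQ_mod: "QQ n x y = QQ n (x mod int n) (y mod int n)"
proof
  fix e
  show "QQ n x y e = QQ n (x mod int n) (y mod int n) e"
  proof (cases "e \<in> dessin_edges n")
    case True
    obtain m k where e: "e = (m,k)" by force
    have "(int m + off x y k) mod int n = (int m + off (x mod int n) (y mod int n) k) mod int n"
      unfolding off_def by (auto simp: mod_simps mod_aux)
    thus ?thesis using True e unfolding QQ_def by simp
  next
    case False thus ?thesis unfolding QQ_def by simp
  qed
qed

lemma QQ_inj: assumes "n > 0"
  shows "inj_on (\<lambda>(x,y). QQ n x y) ({0..<int n} \<times> {0..<int n})"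
proof (rule inj_onI)
  fix p q assume p: "p \<in> {0..<int n} \<times> {0..<int n}" and q: "q \<in> {0..<int n} \<times> {0..<int n}"
    and e: "(\<lambda>(x,y). QQ n x y) p = (\<lambda>(x,y). QQ n x y) q"
  obtain x y where px: "p = (x,y)" by force
  obtain x' y' where qx: "q = (x',y')" by force
  have E0: "(0,0) \<in> dessin_edges n" "(0,1) \<in> dessin_edges n" using assms unfolding dessin_edges_def by auto
  have "QQ n x y (0,0) = QQ n x' y' (0,0)" "QQ n x y (0,1) = QQ n x' y' (0,1)" using e px qx by auto
  hence "nat (x mod int n) = nat (x' mod int n)" "nat (y mod int n) = nat (y' mod int n)"
    using E0 unfolding QQ_def off_def by auto
  hence "x = x'" "y = y'" using p q px qx by auto
  thus "p = q" using px qx by simp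
qed


lemma sub_mod_lt: "n > 0 \<Longrightarrow> sub_mod n m p < n"
  unfolding sub_mod_def by (simp add: nat_less_iff)

lemma s0s1:
  assumes "n = p0 + p1 + p2" "n > 0"
  shows "compose (dessin_edges n) (sigma0 n) (sigma1 p0 p1 p2) = QQ n (- int p1) (- int p2)"
proof
  fix e show "compose (dessin_edges n) (sigma0 n) (sigma1 p0 p1 p2) e = QQ n (- int p1) (- int p2) e"
  proof (cases "e \<in> dessin_edges n")
    case False thus ?thesis by (simp add: compose_def QQ_def)
  next
    case True
    obtain m k where e: "e = (m,k)" by force
    have mk: "m < n" "k < 3" using True e unfolding dessin_edges_def by auto
    have sl: "sub_mod n m p < n" for p using sub_mod_lt assms(2) by blast
    have s1: "sigma1 p0 p1 p2 (m,k) = (if k = 0 then (sub_mod n m p1, 2)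
        else if k = 1 then (sub_mod n m p2, 0) else (sub_mod n m p0, 1))"
      using True e unfolding sigma1_def Let_def assms(1) by simp
    have in1: "sigma1 p0 p1 p2 (m,k) \<in> dessin_edges n" using s1 sl unfolding dessin_edges_def by auto
    have lhs: "compose (dessin_edges n) (sigma0 n) (sigma1 p0 p1 p2) e
       = (if k = 0 then (sub_mod n m p1, 0)
        else if k = 1 then (sub_mod n m p2, 1) else (sub_mod n m p0, 2))"
      using True e in1 s1 unfolding compose_def sigma0_def by auto
    have k2: "(int m - int p0) mod int n = (int m + (- (- int p1) - (- int p2))) mod int n"
    proof -
      have "int m + (- (- int p1) - (- int p2)) = (int m - int p0) + int n" using assms(1) by simp
      thus ?thesis by (simp only: mod_add_self2)
    qed
    have rhs: "QQ n (- int p1) (- int p2) e = (nat ((int m + off (- int p1) (- int p2) k) mod int n), k)"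
      using True e unfolding QQ_def by simp
    show ?thesis unfolding lhs rhs using mk k2 by (auto simp: off_def sub_mod_def)
  qed
qed

lemma s1s0:
  assumes "n = p0 + p1 + p2" "n > 0"
  shows "compose (dessin_edges n) (sigma1 p0 p1 p2) (sigma0 n) = QQ n (- int p2) (- int p0)"
proof
  fix e show "compose (dessin_edges n) (sigma1 p0 p1 p2) (sigma0 n) e = QQ n (- int p2) (- int p0) e"
  proof (cases "e \<in> dessin_edges n")
    case False thus ?thesis by (simp add: compose_def QQ_def)
  next
    case True
    obtain m k where e: "e = (m,k)" by force
    have mk: "m < n" "k < 3" using True e unfolding dessin_edges_def by auto
    have s0: "sigma0 n (m,k) = (m, (k+1) mod 3)" using True e unfolding sigma0_def by simp
    have in1: "sigma0 n (m,k) \<in> dessin_edges n" using s0 mk unfolding dessin_edges_def by auto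
    have s1: "sigma1 p0 p1 p2 (m,(k+1) mod 3) = (if (k+1) mod 3 = 0 then (sub_mod n m p1, 2)
        else if (k+1) mod 3 = 1 then (sub_mod n m p2, 0) else (sub_mod n m p0, 1))"
      using in1 s0 unfolding sigma1_def Let_def assms(1) by simp
    have lhs: "compose (dessin_edges n) (sigma1 p0 p1 p2) (sigma0 n) e
       = (if k = 0 then (sub_mod n m p2, 0)
        else if k = 1 then (sub_mod n m p0, 1) else (sub_mod n m p1, 2))"
    proof -
      consider "k = 0" | "k = 1" | "k = 2" using mk by linarith
      thus ?thesis using True e s0 s1 unfolding compose_def by cases auto
    qed
    have k2: "(int m - int p1) mod int n = (int m + (- (- int p2) - (- int p0))) mod int n"
    proof -
      have "int m + (- (- int p2) - (- int p0)) = (int m - int p1) + int n" using assms(1) by simp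
      thus ?thesis by (simp only: mod_add_self2)
    qed
    have rhs: "QQ n (- int p2) (- int p0) e = (nat ((int m + off (- int p2) (- int p0) k) mod int n), k)"
      using True e unfolding QQ_def by simp
    show ?thesis unfolding lhs rhs using mk k2 by (auto simp: off_def sub_mod_def)
  qed
qed


lemma gen_QQ:
  fixes n :: nat and a b c d :: int
  assumes n0: "n > 0"
  defines "Gr \<equiv> BijGroup (dessin_edges n)"
  shows "generate Gr {QQ n a b, QQ n c d} = (\<lambda>(x,y). QQ n x y) ` SS (int n) a b c d"
proof -
  let ?T = "(\<lambda>(i,j). QQ n (i*a+j* c) (i*b+j*d)) ` UNIV"
  have T_eq: "?T = (\<lambda>(x,y). QQ n x y) ` SS (int n) a b c d"
  proof -
    have "QQ n (i*a+j* c) (i*b+j*d) = (\<lambda>(x,y). QQ n x y) ((i*a+j* c) mod int n, (i*b+j*d) mod int n)" for i j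
      by (simp add: QQ_mod[symmetric])
    thus ?thesis unfolding SS_def by (auto simp: image_iff)
  qed
  have mem: "QQ n (i*a+j* c) (i*b+j*d) \<in> ?T" for i j by (rule image_eqI[of _ _ "(i,j)"]) auto
  have sub1: "generate Gr {QQ n a b, QQ n c d} \<subseteq> ?T"
  proof
    fix h assume "h \<in> generate Gr {QQ n a b, QQ n c d}"
    then show "h \<in> ?T"
    proof (induction rule: generate.induct)
      case one
      show ?case unfolding Gr_def QQ_one using mem[of 0 0] by simp
    next
      case (incl h)
      have m1: "QQ n a b \<in> ?T" using mem[of 1 0] by simp
      have m2: "QQ n c d \<in> ?T" using mem[of 0 1] by simp
      show ?case using incl m1 m2 by blast
    next
      case (inv h)
      have m3: "QQ n (-a) (-b) \<in> ?T" using mem[of "-1" 0] by simp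
      have m4: "QQ n (-c) (-d) \<in> ?T" using mem[of 0 "-1"] by simp
      from inv have "h = QQ n a b \<or> h = QQ n c d" by simp
      then show ?case by (elim disjE) (simp_all only: Gr_def QQ_inv[OF n0] m3 m4)
    next
      case (eng h1 h2)
      then obtain i j i' j' where h: "h1 = QQ n (i*a+j* c) (i*b+j*d)" "h2 = QQ n (i'*a+j'* c) (i'*b+j'*d)" by fast
      have "h1 \<otimes>\<^bsub>Gr\<^esub> h2 = QQ n ((i+i')*a+(j+j')* c) ((i+i')*b+(j+j')*d)"
        unfolding h Gr_def QQ_mult[OF n0] by (simp add: algebra_simps)
      then show ?case using mem by simp
    qed
  qed
  have pow: "QQ n (int m * a) (int m * b) \<in> generate Gr {QQ n a b, QQ n c d}"
    and pow2: "QQ n (int m * c) (int m * d) \<in> generate Gr {QQ n a b, QQ n c d}" for m :: nat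
  proof -
    show "QQ n (int m * a) (int m * b) \<in> generate Gr {QQ n a b, QQ n c d}"
    proof (induction m)
      case 0 show ?case using generate.one[of Gr "{QQ n a b, QQ n c d}"] unfolding Gr_def QQ_one by simp
    next
      case (Suc m)
      have "QQ n (int (Suc m) * a) (int (Suc m) * b) = QQ n (int m * a) (int m * b) \<otimes>\<^bsub>Gr\<^esub> QQ n a b"
        unfolding Gr_def QQ_mult[OF n0] by (simp add: algebra_simps)
      then show ?case using generate.eng[OF Suc generate.incl[of "QQ n a b"]] by simp
    qed
    show "QQ n (int m * c) (int m * d) \<in> generate Gr {QQ n a b, QQ n c d}"
    proof (induction m)
      case 0 show ?case using generate.one[of Gr "{QQ n a b, QQ n c d}"] unfolding Gr_def QQ_one by simp
    next
      case (Suc m)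
      have "QQ n (int (Suc m) * c) (int (Suc m) * d) = QQ n (int m * c) (int m * d) \<otimes>\<^bsub>Gr\<^esub> QQ n c d"
        unfolding Gr_def QQ_mult[OF n0] by (simp add: algebra_simps)
      then show ?case using generate.eng[OF Suc generate.incl[of "QQ n c d"]] by simp
    qed
  qed
  have red: "QQ n (i*u) (i*v) = QQ n (int (nat (i mod int n)) * u) (int (nat (i mod int n)) * v)" for i u v
  proof -
    have "int (nat (i mod int n)) = i mod int n" using n0 by simp
    hence "QQ n (int (nat (i mod int n)) * u) (int (nat (i mod int n)) * v) = QQ n ((i mod int n) * u) ((i mod int n) * v)" by simp
    also have "\<dots> = QQ n (((i mod int n) * u) mod int n) (((i mod int n) * v) mod int n)" by (rule QQ_mod)
    also have "\<dots> = QQ n ((i * u) mod int n) ((i * v) mod int n)" by (simp add: mod_mult_left_eq)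
    also have "\<dots> = QQ n (i*u) (i*v)" by (rule QQ_mod[symmetric])
    finally show ?thesis by simp
  qed
  have sub2: "?T \<subseteq> generate Gr {QQ n a b, QQ n c d}"
  proof
    fix h assume "h \<in> ?T"
    then obtain i j where h: "h = QQ n (i*a+j* c) (i*b+j*d)" by fast
    have "h = QQ n (i*a) (i*b) \<otimes>\<^bsub>Gr\<^esub> QQ n (j* c) (j*d)"
      unfolding h Gr_def QQ_mult[OF n0] by simp
    moreover have "QQ n (i*a) (i*b) \<in> generate Gr {QQ n a b, QQ n c d}" using pow red by metis
    moreover have "QQ n (j* c) (j*d) \<in> generate Gr {QQ n a b, QQ n c d}" using pow2 red by metis
    ultimately show "h \<in> generate Gr {QQ n a b, QQ n c d}" by (simp add: generate.eng)
  qed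
  show ?thesis using sub1 sub2 T_eq by blast
qed

theorem lemma3:
  fixes p0 p1 p2 :: nat
  assumes "p0 > 0" and "p1 > 0" and "p2 > 0"
    and "gcd p0 (gcd p1 p2) = 1"
  defines "n \<equiv> p0 + p1 + p2"
  defines "E \<equiv> dessin_edges n"
  defines "s0 \<equiv> sigma0 n"
  defines "s1 \<equiv> sigma1 p0 p1 p2"
  defines "\<alpha> \<equiv> gcd (int n) (int p0 * int p1 - (int p2)^2)"
  shows "int (card (generate (BijGroup E) {compose E s0 s1, compose E s1 s0})) * \<alpha> = (int n)^2"
proof -
  have n0: "n > 0" using assms(1) n_def by simp
  have A: "compose E s0 s1 = QQ n (- int p1) (- int p2)"
    unfolding E_def s0_def s1_def using s0s1[OF n_def[THEN meta_eq_to_obj_eq] n0] .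
  have B: "compose E s1 s0 = QQ n (- int p2) (- int p0)"
    unfolding E_def s0_def s1_def using s1s0[OF n_def[THEN meta_eq_to_obj_eq] n0] .
  let ?S = "SS (int n) (- int p1) (- int p2) (- int p2) (- int p0)"
  have gen: "generate (BijGroup E) {compose E s0 s1, compose E s1 s0} = (\<lambda>(x,y). QQ n x y) ` ?S"
    unfolding A B unfolding E_def by (rule gen_QQ[OF n0])
  have "inj_on (\<lambda>(x,y). QQ n x y) ?S"
    using QQ_inj[OF n0] SS_sub[of "int n"] n0 by (meson inj_on_subset of_nat_0_less_iff)
  hence card: "card (generate (BijGroup E) {compose E s0 s1, compose E s1 s0}) = card ?S"
    unfolding gen by (rule card_image)
  have g1: "gcd (int p0) (gcd (int p1) (int p2)) = 1"
    using assms(4) by (metis gcd_int_int_eq of_nat_1)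
  have c1: "cont (- int p1) (- int p2) (- int p2) (- int p0) = 1"
    unfolding cont_def using g1 by (simp add: gcd.left_commute gcd.commute gcd.assoc)
  have II: "II (int n) (- int p1) (- int p2) (- int p2) (- int p0) = \<alpha>"
    unfolding II_def c1 \<alpha>_def by (simp add: gcd.commute power2_eq_square mult.commute)
  have "PP (int n) (- int p1) (- int p2) (- int p2) (- int p0) = (int n)^2"
    using PP_all n0 by simp
  thus ?thesis unfolding PP_def II card .
qed

end
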